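(* Let $q$ be a prime power, $\beta$ a primitive element of $\mathbb{F}_{q^2}$, $\mathrm{Tr}(x)=x+x^q$, and $\Psi:\mathbb{F}_{q^2}^n\to\mathbb{F}_q^{2n}$, $\Psi(\alpha_0,\ldots,\alpha_{n-1})=\left(\mathrm{Tr}(\beta\alpha_0),\ldots,\mathrm{Tr}(\beta\alpha_{n-1}),\mathrm{Tr}(\beta^q\alpha_0),\ldots,\mathrm{Tr}(\beta^q\alpha_{n-1})\right)$. Let $g(x)\in\mathbb{F}_q[x]$ be a monic divisor of $x^{2n}-1$ with $g(x)\neq x^{2n}-1$ and $k=\deg g$, let $\mathscr{D}=\langle g(x)\rangle$ be the $q$-ary linear cyclic code of length $2n$ it generates, and $\mathscr{C}=\Psi^{-1}(\mathscr{D})$. Let $h(x)=(x^{2n}-1)/g(x)=h_0+\cdots+h_{2n-k}x^{2n-k}$, $h^*(x)=\frac{1}{h_{2n-k}}x^{2n-k}h(1/x)$, and $V_{h^*(x)}\in\mathbb{F}_q^{2n}$ its coefficient vector. Then the $k$ vectors $\Psi^{-1}(\tau(\sigma^{i}(V_{h^*(x)})))$, $0\le i\le k-1$, form an $\mathbb{F}_q$-basis of the alternating dual $\mathscr{C}^{\perp_a}$ (i.e., they are the rows of an additive generator matrix of $\mathscr{C}^{\perp_a}$).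
   Context: $\sigma(v_0,\ldots,v_{2n-1})=(v_{2n-1},v_0,\ldots,v_{2n-2})$ and $\tau(v_0,\ldots,v_{2n-1})=(-v_n,\ldots,-v_{2n-1},v_0,\ldots,v_{n-1})$. The alternating inner product on $\mathbb{F}_{q^2}^n$ is $\langle u,v\rangle_a=(\beta^{2q}-\beta^2)\sum_{i=0}^{n-1}(u_iv_i^q-u_i^qv_i)$ and $\mathscr{C}^{\perp_a}=\{v\in\mathbb{F}_{q^2}^n:\langle u,v\rangle_a=0\ \forall u\in\mathscr{C}\}$. Vectors of $\mathbb{F}_q^{2n}$ are identified with polynomials of degree $<2n$ modulo $x^{2n}-1$. *)

theory Defs
  imports "HOL-Computational_Algebra.Polynomial"
begin

(* The field F_{q^2} is a finite field type 'a with CARD('a) = q^2;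
   F_q is its subfield {x. x^q = x}. Vectors are lists. *)

definition subfield_q :: "nat \<Rightarrow> 'a::field set" where
  "subfield_q q = {x. x ^ q = x}"

definition prime_power :: "nat \<Rightarrow> bool" where
  "prime_power q \<longleftrightarrow> (\<exists>p m. prime p \<and> m > 0 \<and> q = p ^ m)"

definition primitive_elem :: "'a::field \<Rightarrow> bool" where
  "primitive_elem \<beta> \<longleftrightarrow> (\<forall>x. x \<noteq> 0 \<longrightarrow> (\<exists>j::nat. \<beta> ^ j = x))"

definition Tr :: "nat \<Rightarrow> 'a::field \<Rightarrow> 'a" where
  "Tr q x = x + x ^ q"

definition Psi :: "nat \<Rightarrow> 'a::field \<Rightarrow> 'a list \<Rightarrow> 'a list" where
  "Psi q \<beta> \<alpha> = map (\<lambda>a. Tr q (\<beta> * a)) \<alpha> @ map (\<lambda>a. Tr q (\<beta> ^ q * a)) \<alpha>"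

definition Psi_inv :: "nat \<Rightarrow> 'a::field \<Rightarrow> nat \<Rightarrow> 'a list \<Rightarrow> 'a list" where
  "Psi_inv q \<beta> n w = (THE a. length a = n \<and> Psi q \<beta> a = w)"

definition sigma :: "'a list \<Rightarrow> 'a list" where
  "sigma v = last v # butlast v"

definition tau :: "nat \<Rightarrow> 'a::ab_group_add list \<Rightarrow> 'a list" where
  "tau n v = map uminus (drop n v) @ take n v"

definition coeff_vec :: "nat \<Rightarrow> 'a::zero poly \<Rightarrow> 'a list" where
  "coeff_vec m p = map (coeff p) [0..<m]"

definition xn1 :: "nat \<Rightarrow> 'a::comm_ring_1 poly" where
  "xn1 m = monom 1 m - 1"

definition over_Fq :: "nat \<Rightarrow> 'a::field poly \<Rightarrow> bool" where
  "over_Fq q p \<longleftrightarrow> (\<forall>i. coeff p i \<in> subfield_q q)"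

definition cyclic_code :: "nat \<Rightarrow> nat \<Rightarrow> 'a::field poly \<Rightarrow> 'a list set" where
  "cyclic_code q n g =
     {coeff_vec (2*n) ((g * f) mod xn1 (2*n)) | f. over_Fq q f}"

definition code_C :: "nat \<Rightarrow> 'a::field \<Rightarrow> nat \<Rightarrow> 'a poly \<Rightarrow> 'a list set" where
  "code_C q \<beta> n g = {\<alpha>. length \<alpha> = n \<and> Psi q \<beta> \<alpha> \<in> cyclic_code q n g}"

definition alt_ip :: "nat \<Rightarrow> 'a::field \<Rightarrow> nat \<Rightarrow> 'a list \<Rightarrow> 'a list \<Rightarrow> 'a" where
  "alt_ip q \<beta> n u v = (\<beta> ^ (2*q) - \<beta> ^ 2) *
     (\<Sum>i<n. u ! i * (v ! i) ^ q - (u ! i) ^ q * v ! i)"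

definition alt_dual :: "nat \<Rightarrow> 'a::field \<Rightarrow> nat \<Rightarrow> 'a list set \<Rightarrow> 'a list set" where
  "alt_dual q \<beta> n C = {v. length v = n \<and> (\<forall>u\<in>C. alt_ip q \<beta> n u v = 0)}"

definition lincomb :: "nat \<Rightarrow> nat \<Rightarrow> (nat \<Rightarrow> 'a::field) \<Rightarrow> (nat \<Rightarrow> 'a list) \<Rightarrow> 'a list" where
  "lincomb n k c v = map (\<lambda>j. \<Sum>i<k. c i * (v i ! j)) [0..<n]"

definition is_Fq_basis :: "nat \<Rightarrow> nat \<Rightarrow> nat \<Rightarrow> (nat \<Rightarrow> 'a::field list) \<Rightarrow> 'a list set \<Rightarrow> bool" where
  "is_Fq_basis q n k v S \<longleftrightarrow>
     (\<forall>i<k. v i \<in> S) \<and>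
     (\<forall>c. (\<forall>i<k. c i \<in> subfield_q q) \<and> lincomb n k c v = replicate n 0
            \<longrightarrow> (\<forall>i<k. c i = 0)) \<and>
     (\<forall>w\<in>S. \<exists>c. (\<forall>i<k. c i \<in> subfield_q q) \<and> w = lincomb n k c v)"

end

theory Submission
  imports Defs "HOL-Computational_Algebra.Primes"
begin


lemma CHAR_dvd_card_fin:
  shows "CHAR('a::{field,finite}) dvd card (UNIV :: 'a set)"
proof -
  define r where "r = CHAR('a)"
  have rpos: "r > 0" unfolding r_def by (rule finite_imp_CHAR_pos) simp
  define H :: "'a set" where "H = of_nat ` {..<r}"
  have inj: "inj_on (of_nat :: nat \<Rightarrow> 'a) {..<r}"
  proof (rule inj_onI)
    fix a b assume ab: "a \<in> {..<r}" "b \<in> {..<r}" "(of_nat a :: 'a) = of_nat b"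
    show "a = b"
    proof (rule ccontr)
      assume "a \<noteq> b"
      then consider "a < b" | "b < a" by linarith
      then show False
      proof cases
        case 1
        then have "CHAR('a) dvd (b - a)" using ab of_nat_eq_iff_char_dvd[of a b, where ?'a='a] by simp
        moreover have "0 < b - a" "b - a < r" using 1 ab by auto
        ultimately show False unfolding r_def by (meson nat_dvd_not_less)
      next
        case 2
        then have "CHAR('a) dvd (a - b)" using ab of_nat_eq_iff_char_dvd[of b a, where ?'a='a] by simp
        moreover have "0 < a - b" "a - b < r" using 2 ab by auto
        ultimately show False unfolding r_def by (meson nat_dvd_not_less)
      qed
    qed
  qed
  have cardH: "card H = r" unfolding H_def using inj by (simp add: card_image)
  have Hr: "H = range of_nat"
  proof
    show "range of_nat \<subseteq> H"
    proof
      fix x assume "x \<in> range (of_nat :: nat \<Rightarrow> 'a)"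
      then obtain k where k: "x = of_nat k" by auto
      have "(of_nat k :: 'a) = of_nat (k div r * r) + of_nat (k mod r)"
        by (simp only: of_nat_add[symmetric] div_mult_mod_eq)
      also have "(of_nat (k div r * r) :: 'a) = 0"
        by (simp add: r_def)
      finally show "x \<in> H" unfolding H_def k using rpos by auto
    qed
  qed (auto simp: H_def)
  have Hadd: "a \<in> H \<Longrightarrow> b \<in> H \<Longrightarrow> a + b \<in> H" for a b
  proof -
    assume "a \<in> H" "b \<in> H"
    then obtain i j where "a = of_nat i" "b = of_nat j" unfolding Hr by auto
    then have "a + b = of_nat (i + j)" by simp
    then show ?thesis unfolding Hr by (metis rangeI)
  qed
  have Hneg: "a \<in> H \<Longrightarrow> - a \<in> H" for a
  proof -
    assume "a \<in> H"
    then obtain k where k: "a = of_nat k" unfolding Hr by auto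
    have "(of_nat (r * k - k) :: 'a) = of_nat (r * k) - of_nat k"
      using rpos by (intro of_nat_diff) simp
    also have "(of_nat (r * k) :: 'a) = 0" by (simp add: r_def)
    finally show "- a \<in> H" unfolding Hr k by (metis diff_0 rangeI)
  qed
  have H0: "0 \<in> H" unfolding Hr by (metis of_nat_0 rangeI)
  have coset_eq: "u \<in> H \<Longrightarrow> (+) u ` H = H" for u
  proof
    assume u: "u \<in> H"
    show "(+) u ` H \<subseteq> H"
    proof
      fix z assume "z \<in> (+) u ` H"
      then obtain h where "h \<in> H" "z = u + h" by blast
      then show "z \<in> H" using Hadd u by blast
    qed
    show "H \<subseteq> (+) u ` H"
    proof
      fix h assume "h \<in> H"
      have "- u \<in> H" using Hneg u by blast
      then have "h + - u \<in> H" using Hadd \<open>h \<in> H\<close> by blast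
      then have "h - u \<in> H" by simp
      moreover have "h = u + (h - u)" by simp
      ultimately show "h \<in> (+) u ` H" by blast
    qed
  qed
  define C where "C = (\<lambda>x. (+) x ` H) ` UNIV"
  have "r * card C = card (\<Union>C)"
  proof (rule card_partition)
    show "finite C" "finite (\<Union>C)" by auto
    show "card c = r" if "c \<in> C" for c using that unfolding C_def
      by (auto simp: card_image cardH)
    show "c1 \<inter> c2 = {}" if c: "c1 \<in> C" "c2 \<in> C" "c1 \<noteq> c2" for c1 c2
    proof -
      obtain x y where xy: "c1 = (+) x ` H" "c2 = (+) y ` H" using c unfolding C_def by auto
      show "c1 \<inter> c2 = {}"
      proof (rule ccontr)
        assume "c1 \<inter> c2 \<noteq> {}"
        then obtain a b where ab: "a \<in> H" "b \<in> H" "x + a = y + b" using xy by auto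
        have xe: "x = y + (b - a)" using ab(3) by (metis add_diff_cancel_right' add_diff_eq)
        have "c1 = (+) y ` ((+) (b - a) ` H)"
          unfolding xy image_image xe by (simp add: add.assoc)
        also have "(+) (b - a) ` H = H"
        proof -
          have "- a \<in> H" using Hneg ab by blast
          then have "b + - a \<in> H" using Hadd ab by blast
          then have "b - a \<in> H" by simp
          then show ?thesis by (rule coset_eq)
        qed
        finally show False using c xy by simp
      qed
    qed
  qed
  moreover have "\<Union>C = UNIV"
  proof -
    have "x \<in> \<Union>C" for x using H0 unfolding C_def by force
    then show ?thesis by auto
  qed
  ultimately show ?thesis unfolding r_def by (metis dvd_triv_left)
qed


lemma fin_field_pow_card:
  fixes x :: "'a :: {field,finite}"
  shows "x ^ card (UNIV :: 'a set) = x"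
proof (cases "x = 0")
  case False
  have "x * (\<Prod>y\<in>UNIV-{0}. x * y) = x * x ^ (card (UNIV :: 'a set) - 1) * \<Prod>(UNIV-{0})"
    by (simp add: prod.distrib mult_ac)
  also have "x * x ^ (card (UNIV :: 'a set) - 1) = x ^ Suc (card (UNIV :: 'a set) - 1)"
    by (subst power_Suc) auto
  also have "Suc (card (UNIV :: 'a set) - 1) = card (UNIV :: 'a set)"
    using finite_UNIV_card_ge_0[where ?'a = 'a] by simp
  also have "(\<Prod>y\<in>UNIV-{0}. x * y) = (\<Prod>y\<in>UNIV-{0}. y)"
    by (rule prod.reindex_bij_witness[of _ "\<lambda>y. y / x" "\<lambda>y. x * y"]) (use False in auto)
  finally show ?thesis
    by simp
qed (use finite_UNIV_card_ge_0[where ?'a = 'a] in auto)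

lemma char_facts:
  fixes q :: nat
  assumes pp: "prime_power q" and card: "card (UNIV :: 'a::{field,finite} set) = q ^ 2"
  shows "q \<ge> 2" "\<And>x y::'a. (x + y) ^ q = x ^ q + y ^ q" "\<And>x::'a. x ^ (q*q) = x"
proof -
  obtain p e where p: "prime p" "e > 0" "q = p ^ e" using pp unfolding prime_power_def by blast
  have "p \<ge> 2" using p prime_ge_2_nat by blast
  then have "p ^ e \<ge> p" using p by (simp add: self_le_power)
  then show "q \<ge> 2" using p \<open>p\<ge>2\<close> by linarith
  have cpos: "CHAR('a) > 0" by (rule finite_imp_CHAR_pos) simp
  have cpr: "prime CHAR('a)" using prime_CHAR_semidom cpos by blast
  have "CHAR('a) dvd card (UNIV :: 'a set)" by (rule CHAR_dvd_card_fin)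
  then have "CHAR('a) dvd p ^ (2*e)" using card p by (simp add: power_mult[symmetric] mult.commute)
  then have "CHAR('a) dvd p" using cpr prime_dvd_power by blast
  then have cp: "CHAR('a) = p" using p cpr by (simp add: primes_dvd_imp_eq)
  show "\<And>x y::'a. (x + y) ^ q = x ^ q + y ^ q"
    using freshmans_dream'[OF cpr, of q e] cp p by simp
  show "\<And>x::'a. x ^ (q*q) = x"
    using fin_field_pow_card[where ?'a='a] card by (metis power2_eq_square)
qed



definition dotp :: "nat \<Rightarrow> 'a::comm_ring_1 list \<Rightarrow> 'a list \<Rightarrow> 'a" where
  "dotp m a b = (\<Sum>j<m. a ! j * b ! j)"

locale ffq =
  fixes q :: nat and \<beta> :: "'a::{field,finite}"
  assumes q2: "q \<ge> 2"
    and fadd: "\<And>x y::'a. (x + y) ^ q = x ^ q + y ^ q"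
    and fqq: "\<And>x::'a. x ^ (q*q) = x"
    and dnz: "\<beta> ^ 2 - \<beta> ^ (2*q) \<noteq> 0"
begin

lemma fneg: "(- x) ^ q = - (x ^ q)" for x :: 'a
proof -
  have "(x + - x) ^ q = x ^ q + (-x) ^ q" by (rule fadd)
  then have "0 = x ^ q + (-x) ^ q" using q2 by (simp add: zero_power)
  then show ?thesis by (simp add: eq_neg_iff_add_eq_0 add.commute)
qed

lemma fdiff: "(x - y) ^ q = x ^ q - y ^ q" for x y :: 'a
  using fadd[of x "-y"] fneg[of y] by simp

lemma fsum: "(\<Sum>i\<in>A. f i) ^ q = (\<Sum>i\<in>A. f i ^ q)" for f :: "_ \<Rightarrow> 'a"
proof (induction A rule: infinite_finite_induct)
  case (infinite A) then show ?case using q2 by (simp add: power_0_left)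
next
  case empty then show ?case using q2 by simp
next
  case (insert x F) then show ?case by (simp add: fadd)
qed

lemma fqq': "(x ^ q) ^ q = x" for x :: 'a
  using fqq[of x] by (simp add: power_mult[symmetric])

lemma F0: "0 \<in> subfield_q q" using q2 by (simp add: subfield_q_def)
lemma F1: "1 \<in> subfield_q q" by (simp add: subfield_q_def)
lemma Fadd: "x \<in> subfield_q q \<Longrightarrow> y \<in> subfield_q q \<Longrightarrow> x + y \<in> subfield_q q" for x y :: 'a
  by (simp add: subfield_q_def fadd)
lemma Fmult: "x \<in> subfield_q q \<Longrightarrow> y \<in> subfield_q q \<Longrightarrow> x * y \<in> subfield_q q" for x y :: 'a
  by (simp add: subfield_q_def power_mult_distrib)
lemma Fneg: "x \<in> subfield_q q \<Longrightarrow> - x \<in> subfield_q q" for x :: 'a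
  by (simp add: subfield_q_def fneg)
lemma Fdiff: "x \<in> subfield_q q \<Longrightarrow> y \<in> subfield_q q \<Longrightarrow> x - y \<in> subfield_q q" for x y :: 'a
  by (simp add: subfield_q_def fdiff)
lemma Fsum: "(\<And>i. i \<in> A \<Longrightarrow> f i \<in> subfield_q q) \<Longrightarrow> (\<Sum>i\<in>A. f i) \<in> subfield_q q" for f :: "_ \<Rightarrow> 'a"
  by (simp add: subfield_q_def fsum)
lemma FTr: "Tr q x \<in> subfield_q q" for x :: 'a
  by (simp add: subfield_q_def Tr_def fadd fqq' add.commute)

definition recf :: "'a \<Rightarrow> 'a \<Rightarrow> 'a" where
  "recf s t = (\<beta> * s - \<beta> ^ q * t) / (\<beta> ^ 2 - \<beta> ^ (2*q))"

lemma bq: "(\<beta> ^ q) ^ q = \<beta>" by (rule fqq')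

lemma recf_Tr: "recf (Tr q (\<beta> * a)) (Tr q (\<beta> ^ q * a)) = a"
proof -
  have e: "\<beta> * (\<beta> * a + (\<beta> * a) ^ q) - \<beta> ^ q * (\<beta> ^ q * a + (\<beta> ^ q * a) ^ q)
        = a * (\<beta> ^ 2 - \<beta> ^ (2*q))"
    by (simp add: power_mult_distrib bq algebra_simps power2_eq_square power_mult[of \<beta> 2 q, simplified mult.commute])
  show ?thesis unfolding recf_def Tr_def e using dnz by simp
qed

lemma recf_pow:
  assumes "s \<in> subfield_q q" "t \<in> subfield_q q"
  shows "(recf s t) ^ q = (\<beta> ^ q * s - \<beta> * t) / (\<beta> ^ (2*q) - \<beta> ^ 2)"
proof -
  have s: "s ^ q = s" and t: "t ^ q = t" using assms by (auto simp: subfield_q_def)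
  have b2: "(\<beta> ^ 2) ^ q = \<beta> ^ (2*q)" by (simp add: power_mult)
  have b2q: "(\<beta> ^ (2*q)) ^ q = \<beta> ^ 2"
    by (metis bq power_mult power_mult_distrib mult.commute power2_eq_square)
  show ?thesis unfolding recf_def
    by (simp add: power_divide fdiff power_mult_distrib s t bq b2 b2q)
qed

lemma gen1: "b ^ 2 - y ^ 2 \<noteq> 0 \<Longrightarrow>
   b * ((b * s - y * t) / (b ^ 2 - y ^ 2)) + y * ((y * s - b * t) / (y ^ 2 - b ^ 2)) = s"
  for b y s t :: "'b::field"
proof -
  assume h: "b ^ 2 - y ^ 2 \<noteq> 0"
  have h2: "y ^ 2 - b ^ 2 = - (b ^ 2 - y ^ 2)" by simp
  have "b * ((b * s - y * t) / (b ^ 2 - y ^ 2)) + y * ((y * s - b * t) / (y ^ 2 - b ^ 2))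
     = (b * (b * s - y * t) - y * (y * s - b * t)) / (b ^ 2 - y ^ 2)"
    proof -
      have h3: "y ^ 2 - b ^ 2 \<noteq> 0" using h by (metis right_minus_eq)
      have e: "y ^ 2 - b ^ 2 = - (b ^ 2 - y ^ 2)" by simp
      show ?thesis unfolding e divide_minus_right
        by (simp add: divide_inverse algebra_simps)
    qed
  also have "b * (b * s - y * t) - y * (y * s - b * t) = s * (b ^ 2 - y ^ 2)"
    by (simp add: algebra_simps power2_eq_square)
  finally show ?thesis using h by simp
qed

lemma gen2: "b ^ 2 - y ^ 2 \<noteq> 0 \<Longrightarrow>
   y * ((b * s - y * t) / (b ^ 2 - y ^ 2)) + b * ((y * s - b * t) / (y ^ 2 - b ^ 2)) = t"
  for b y s t :: "'b::field"
proof -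
  assume h: "b ^ 2 - y ^ 2 \<noteq> 0"
  have h2: "y ^ 2 - b ^ 2 = - (b ^ 2 - y ^ 2)" by simp
  have "y * ((b * s - y * t) / (b ^ 2 - y ^ 2)) + b * ((y * s - b * t) / (y ^ 2 - b ^ 2))
     = (y * (b * s - y * t) - b * (y * s - b * t)) / (b ^ 2 - y ^ 2)"
    proof -
      have h3: "y ^ 2 - b ^ 2 \<noteq> 0" using h by (metis right_minus_eq)
      have e: "y ^ 2 - b ^ 2 = - (b ^ 2 - y ^ 2)" by simp
      show ?thesis unfolding e divide_minus_right
        by (simp add: divide_inverse algebra_simps)
    qed
  also have "y * (b * s - y * t) - b * (y * s - b * t) = t * (b ^ 2 - y ^ 2)"
    by (simp add: algebra_simps power2_eq_square)
  finally show ?thesis using h by simp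
qed

lemma b2q_sq: "\<beta> ^ (2*q) = (\<beta> ^ q) ^ 2"
  by (simp add: power_mult[symmetric] mult.commute)

lemma Tr_recf1:
  assumes "s \<in> subfield_q q" "t \<in> subfield_q q"
  shows "Tr q (\<beta> * recf s t) = s"
proof -
  have d2: "\<beta> ^ (2*q) - \<beta> ^ 2 \<noteq> 0" using dnz by (metis right_minus_eq)
  have "Tr q (\<beta> * recf s t) = \<beta> * recf s t + \<beta> ^ q * (recf s t) ^ q"
    by (simp add: Tr_def power_mult_distrib)
  also have "\<dots> = s" unfolding recf_pow[OF assms] unfolding recf_def b2q_sq
    by (rule gen1) (use dnz b2q_sq in simp)
  finally show ?thesis .
qed

lemma Tr_recf2:
  assumes "s \<in> subfield_q q" "t \<in> subfield_q q"
  shows "Tr q (\<beta> ^ q * recf s t) = t"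
proof -
  have d2: "\<beta> ^ (2*q) - \<beta> ^ 2 \<noteq> 0" using dnz by (metis right_minus_eq)
  have "Tr q (\<beta> ^ q * recf s t) = \<beta> ^ q * recf s t + \<beta> * (recf s t) ^ q"
    by (simp add: Tr_def power_mult_distrib bq)
  also have "\<dots> = t" unfolding recf_pow[OF assms] unfolding recf_def b2q_sq
    by (rule gen2) (use dnz b2q_sq in simp)
  finally show ?thesis .
qed

end


lemma sum_split_add: "(\<Sum>j<a + (b::nat). f j) = (\<Sum>j<a. f j) + (\<Sum>j<b. f (a + j))"
  by (induction b) (simp_all add: add.assoc)

lemma length_Psi [simp]: "length (Psi q \<beta> a) = 2 * length a"
  by (simp add: Psi_def)

lemma nth_Psi: "j < 2 * length a \<Longrightarrow> Psi q \<beta> a ! j =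
   (if j < length a then Tr q (\<beta> * a ! j) else Tr q (\<beta> ^ q * a ! (j - length a)))"
  by (simp add: Psi_def nth_append)

lemma length_tau [simp]: "length v = 2 * n \<Longrightarrow> length (tau n v) = 2 * n"
  by (simp add: tau_def)

lemma nth_tau: "length v = 2 * n \<Longrightarrow> j < 2 * n \<Longrightarrow>
   tau n v ! j = (if j < n then - (v ! (n + j)) else v ! (j - n))"
  by (auto simp: tau_def nth_append min_def)

lemma tau_tau: "length v = 2 * n \<Longrightarrow> tau n (tau n v) = map uminus v"
  by (rule nth_equalityI) (auto simp: nth_tau)

lemma length_lincomb [simp]: "length (lincomb n k c v) = n"
  by (simp add: lincomb_def)

lemma nth_lincomb: "j < n \<Longrightarrow> lincomb n k c v ! j = (\<Sum>i<k. c i * (v i ! j))"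
  by (simp add: lincomb_def)

lemma tau_lincomb:
  assumes "\<And>i. i < k \<Longrightarrow> length (x i) = 2 * n"
  shows "tau n (lincomb (2*n) k c x) = lincomb (2*n) k c (\<lambda>i. tau n (x i))"
  by (rule nth_equalityI) (auto simp: nth_tau nth_lincomb assms sum_negf)

context ffq begin

definition PI :: "nat \<Rightarrow> 'a list \<Rightarrow> 'a list" where
  "PI n w = map (\<lambda>j. recf (w ! j) (w ! (n + j))) [0..<n]"

lemma length_PI [simp]: "length (PI n w) = n" by (simp add: PI_def)

lemma Psi_PI:
  assumes "length w = 2 * n" "set w \<subseteq> subfield_q q"
  shows "Psi q \<beta> (PI n w) = w"
proof (rule nth_equalityI)
  show "length (Psi q \<beta> (PI n w)) = length w" using assms by simp
  fix j assume "j < length (Psi q \<beta> (PI n w))"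
  then have j: "j < 2 * n" by simp
  have F: "\<And>i. i < 2 * n \<Longrightarrow> w ! i \<in> subfield_q q" using assms by (auto simp: set_conv_nth)
  show "Psi q \<beta> (PI n w) ! j = w ! j"
  proof (cases "j < n")
    case True then show ?thesis using j F
      by (simp add: nth_Psi PI_def Tr_recf1)
  next
    case False
    then have "j - n < n" "n + (j - n) = j" using j by auto
    then show ?thesis using j F False
      by (simp add: nth_Psi PI_def Tr_recf2)
  qed
qed

lemma PI_Psi: "length a = n \<Longrightarrow> PI n (Psi q \<beta> a) = a"
  by (rule nth_equalityI) (auto simp: PI_def nth_Psi recf_Tr)

lemma Psi_F: "set (Psi q \<beta> a) \<subseteq> subfield_q q"
  by (auto simp: Psi_def FTr)

lemma Psi_inv_eq:
  assumes "length w = 2 * n" "set w \<subseteq> subfield_q q"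
  shows "Psi_inv q \<beta> n w = PI n w"
  unfolding Psi_inv_def
proof (rule the_equality)
  show "length (PI n w) = n \<and> Psi q \<beta> (PI n w) = w" using Psi_PI[OF assms] by simp
  fix a assume "length a = n \<and> Psi q \<beta> a = w"
  then show "a = PI n w" using PI_Psi by metis
qed

lemma recf_sum: "recf (\<Sum>i<k. c i * s i) (\<Sum>i<k. c i * t i) = (\<Sum>i<k. c i * recf (s i) (t i))"
  unfolding recf_def
  by (simp add: sum_distrib_left sum_divide_distrib sum_subtractf[symmetric] algebra_simps)

lemma PI_lincomb:
  assumes "\<And>i. i < k \<Longrightarrow> length (x i) = 2 * n"
  shows "PI n (lincomb (2*n) k c x) = lincomb n k c (\<lambda>i. PI n (x i))"
  by (rule nth_equalityI) (auto simp: PI_def nth_lincomb recf_sum)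

lemma lincomb_F:
  fixes c :: "nat \<Rightarrow> 'a" and x :: "nat \<Rightarrow> 'a list"
  assumes "\<And>i. i < k \<Longrightarrow> c i \<in> subfield_q q"
    and "\<And>i j. i < k \<Longrightarrow> j < m \<Longrightarrow> x i ! j \<in> subfield_q q"
  shows "set (lincomb m k c x) \<subseteq> subfield_q q"
proof
  fix y assume "y \<in> set (lincomb m k c x)"
  then obtain j where j: "j < m" "y = lincomb m k c x ! j" by (auto simp: set_conv_nth)
  show "y \<in> subfield_q q" unfolding j(2) nth_lincomb[OF j(1)]
    by (rule Fsum) (use assms j in \<open>auto intro: Fmult\<close>)
qed

lemma alt_ident:
  assumes "length u = n" "length v = n"
  shows "alt_ip q \<beta> n u v = dotp (2*n) (Psi q \<beta> u) (tau n (Psi q \<beta> v))"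
proof -
  have pt: "Tr q (\<beta> ^ q * a) * Tr q (\<beta> * b) - Tr q (\<beta> * a) * Tr q (\<beta> ^ q * b)
      = (\<beta> ^ (2*q) - \<beta> ^ 2) * (a * b ^ q - a ^ q * b)" for a b
    unfolding Tr_def power_mult_distrib bq b2q_sq
    by (simp add: algebra_simps power2_eq_square)
  have "dotp (2*n) (Psi q \<beta> u) (tau n (Psi q \<beta> v))
      = (\<Sum>j<n. Psi q \<beta> u ! j * tau n (Psi q \<beta> v) ! j)
        + (\<Sum>j<n. Psi q \<beta> u ! (n + j) * tau n (Psi q \<beta> v) ! (n + j))"
    unfolding dotp_def mult_2 sum_split_add ..
  also have "\<dots> = (\<Sum>j<n. - (Tr q (\<beta> * u ! j) * Tr q (\<beta> ^ q * v ! j)))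
        + (\<Sum>j<n. Tr q (\<beta> ^ q * u ! j) * Tr q (\<beta> * v ! j))"
    using assms by (simp add: nth_tau nth_Psi)
  also have "\<dots> = (\<Sum>j<n. (\<beta> ^ (2*q) - \<beta> ^ 2) * (u ! j * (v ! j) ^ q - (u ! j) ^ q * v ! j))"
    by (simp add: sum.distrib[symmetric] pt)
  also have "\<dots> = alt_ip q \<beta> n u v"
    by (simp add: alt_ip_def sum_distrib_left)
  finally show ?thesis ..
qed

end


lemma coeff_xn1: "coeff (xn1 m :: 'a::comm_ring_1 poly) i = (if i = m then 1 else 0) - (if i = 0 then 1 else 0)"
  by (simp add: xn1_def coeff_monom)

lemma degree_xn1: "m > 0 \<Longrightarrow> degree (xn1 m :: 'a::comm_ring_1 poly) = m"
proof -
  assume m: "m > 0"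
  have "degree (xn1 m :: 'a poly) \<le> m"
    by (rule degree_le) (auto simp: coeff_xn1)
  moreover have "coeff (xn1 m :: 'a poly) m \<noteq> 0" using m by (simp add: coeff_xn1)
  then have "m \<le> degree (xn1 m :: 'a poly)" by (rule le_degree)
  ultimately show ?thesis by simp
qed

lemma xn1_nz: "m > 0 \<Longrightarrow> (xn1 m :: 'a::comm_ring_1 poly) \<noteq> 0"
proof -
  assume m: "m > 0"
  have "coeff (xn1 m :: 'a poly) m \<noteq> 0" using m by (simp add: coeff_xn1)
  then show ?thesis by auto
qed

lemma lc_xn1: "m > 0 \<Longrightarrow> lead_coeff (xn1 m :: 'a::comm_ring_1 poly) = 1"
  by (simp add: degree_xn1 coeff_xn1)

definition revm :: "nat \<Rightarrow> 'a::comm_ring_1 poly \<Rightarrow> 'a poly" where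
  "revm a A = (\<Sum>l<a. monom (coeff A (a - 1 - l)) l)"

lemma coeff_revm: "coeff (revm a A) t = (if t < a then coeff A (a - 1 - t) else 0)"
  by (simp add: revm_def coeff_sum coeff_monom)

lemma degree_revm: "a > 0 \<Longrightarrow> degree (revm a A) < a"
proof -
  assume "a > 0"
  have "degree (revm a A) \<le> a - 1" by (rule degree_le) (auto simp: coeff_revm)
  then show ?thesis using \<open>a > 0\<close> by simp
qed

lemma revm_revm: "degree A < a \<Longrightarrow> revm a (revm a A) = A"
proof (rule poly_eqI)
  fix t assume d: "degree A < a"
  show "coeff (revm a (revm a A)) t = coeff A t"
  proof (cases "t < a")
    case True
    then have "a - 1 - t < a" "a - 1 - (a - 1 - t) = t" by auto
    then show ?thesis using True by (simp add: coeff_revm)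
  next
    case False
    then have "degree A < t" using d by simp
    then show ?thesis using False by (simp add: coeff_revm coeff_eq_0)
  qed
qed

lemma revm_0 [simp]: "revm a 0 = 0"
  by (simp add: revm_def)

lemma revm_reflect:
  fixes A :: "'a::{comm_ring_1} poly"
  assumes "A \<noteq> 0" "degree A < a"
  shows "revm a A = monom 1 (a - 1 - degree A) * reflect_poly A"
proof (rule poly_eqI)
  fix t
  let ?s = "a - 1 - degree A"
  show "coeff (revm a A) t = coeff (monom 1 ?s * reflect_poly A) t"
  proof (cases "t < ?s")
    case True
    then have "degree A < a - 1 - t" "t < a" using assms by linarith+
    then show ?thesis using True by (simp add: coeff_revm coeff_monom_mult coeff_eq_0)
  next
    case False
    show ?thesis
    proof (cases "t < a")
      case True
      then have "\<not> t - ?s > degree A" "degree A - (t - ?s) = a - 1 - t" using False assms by linarith+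
      then show ?thesis using True False by (simp add: coeff_revm coeff_monom_mult coeff_reflect_poly)
    next
      case F2: False
      then have "t - ?s > degree A" using False assms by linarith
      then show ?thesis using F2 False by (simp add: coeff_revm coeff_monom_mult coeff_reflect_poly)
    qed
  qed
qed

lemma revm_mult:
  fixes A B :: "'a::{idom} poly"
  assumes "A \<noteq> 0" "B \<noteq> 0" "degree A < a" "degree B < b"
  shows "revm (a + b - 1) (A * B) = revm a A * revm b B"
proof -
  have d: "degree (A * B) = degree A + degree B" using assms by (simp add: degree_mult_eq)
  have "revm (a + b - 1) (A * B) = monom 1 (a + b - 1 - 1 - degree (A * B)) * reflect_poly (A * B)"
    by (rule revm_reflect) (use assms d in auto)
  also have "\<dots> = (monom 1 (a - 1 - degree A) * reflect_poly A) * (monom 1 (b - 1 - degree B) * reflect_poly B)"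
  proof -
    have "monom 1 (a + b - 1 - 1 - degree (A * B)) = monom (1::'a) (a - 1 - degree A) * monom 1 (b - 1 - degree B)"
      unfolding mult_monom using assms d by (simp add: algebra_simps)
    then show ?thesis by (simp add: reflect_poly_mult ac_simps)
  qed
  also have "\<dots> = revm a A * revm b B" using assms by (simp add: revm_reflect)
  finally show ?thesis .
qed

lemma length_coeff_vec [simp]: "length (coeff_vec m P) = m"
  by (simp add: coeff_vec_def)

lemma nth_coeff_vec [simp]: "j < m \<Longrightarrow> coeff_vec m P ! j = coeff P j"
  by (simp add: coeff_vec_def)

lemma coeff_vec_Poly: "length w = m \<Longrightarrow> coeff_vec m (Poly w) = w"
  by (rule nth_equalityI) (auto simp: nth_default_def)

lemma Poly_coeff_vec: "degree P < m \<Longrightarrow> Poly (coeff_vec m P) = P"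
  by (rule poly_eqI) (auto simp: nth_default_def coeff_eq_0)

lemma degree_Poly_lt: "length w = m \<Longrightarrow> m > 0 \<Longrightarrow> degree (Poly w) < m"
proof -
  assume a: "length w = m" "m > 0"
  have "degree (Poly w) \<le> m - 1" by (rule degree_le) (use a in \<open>auto simp: nth_default_def\<close>)
  then show ?thesis using a by simp
qed

lemma dot_lemma:
  assumes "m > 0" "degree A < m" "length w = m"
  shows "dotp m (coeff_vec m A) w = coeff (A * revm m (Poly w)) (m - 1)"
proof -
  have "coeff (A * revm m (Poly w)) (m - 1) = (\<Sum>i\<le>m-1. coeff A i * coeff (revm m (Poly w)) (m - 1 - i))"
    by (rule coeff_mult)
  also have "\<dots> = (\<Sum>i<m. coeff A i * w ! i)"
  proof -
    have "{..m-1} = {..<m}" using assms by auto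
    moreover have "\<And>i. i < m \<Longrightarrow> coeff (revm m (Poly w)) (m - 1 - i) = w ! i"
      using assms by (auto simp: coeff_revm nth_default_def)
    ultimately show ?thesis by simp
  qed
  also have "\<dots> = dotp m (coeff_vec m A) w" by (simp add: dotp_def)
  finally show ?thesis ..
qed

lemma mod_coeff_top:
  fixes X :: "'a::field poly"
  assumes m: "m > 0" and dX: "degree X < 2 * m - 1"
  shows "coeff (X mod xn1 m) (m - 1) = coeff X (m - 1)"
proof -
  define D where "D = X div xn1 m"
  define R where "R = X mod xn1 m"
  have X: "X = xn1 m * D + R" unfolding D_def R_def by (simp add: mult.commute)
  have dx: "degree (xn1 m :: 'a poly) = m" using degree_xn1[OF m] by simp
  have nz: "xn1 m \<noteq> (0 :: 'a poly)" using xn1_nz[OF m] by simp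
  have dR: "R = 0 \<or> degree R < m" unfolding R_def using degree_mod_less[OF xn1_nz[OF m], of X] dx by simp
  have cD: "coeff D (m - 1) = 0"
  proof (cases "D = 0")
    case True then show ?thesis by simp
  next
    case False
    have "degree (xn1 m * D) = m + degree D"
      using False nz dx by (simp add: degree_mult_eq)
    moreover have "degree (xn1 m * D) \<le> max (degree X) (degree R)"
      using X degree_diff_le_max[of X R] by (metis add_diff_cancel_right')
    ultimately have "m + degree D < 2 * m - 1" using dX dR m by auto
    then show ?thesis using m by (intro coeff_eq_0) auto
  qed
  have "coeff X (m - 1) = coeff (xn1 m * D) (m - 1) + coeff R (m - 1)" using X by simp
  also have "coeff (xn1 m * D) (m - 1) = 0"
    using cD m by (simp add: xn1_def left_diff_distrib coeff_monom_mult)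
  finally show ?thesis unfolding R_def by simp
qed

lemma lincomb_coeff_vec:
  "lincomb m k c (\<lambda>i. coeff_vec m (monom 1 i * P)) = coeff_vec m ((\<Sum>i<k. monom (c i) i) * P)"
  by (rule nth_equalityI)
     (auto simp: nth_lincomb sum_distrib_right coeff_sum coeff_monom_mult intro!: sum.cong)

lemma sum_monoms_eq: "(\<And>i. i \<ge> k \<Longrightarrow> coeff Q i = 0) \<Longrightarrow> (\<Sum>i<k. monom (coeff Q i) i) = Q"
  by (rule poly_eqI) (auto simp: coeff_sum coeff_monom not_less)



lemma basic_gh:
  fixes g h :: "'a::field poly"
  assumes m: "m > 0" and gh: "g * h = xn1 m" and k: "degree g = k"
  shows "g \<noteq> 0" "h \<noteq> 0" "degree h = m - k" "k \<le> m" "coeff h 0 \<noteq> 0"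
proof -
  have nz: "xn1 m \<noteq> (0 :: 'a poly)" using xn1_nz[OF m] by simp
  show g0: "g \<noteq> 0" and h0: "h \<noteq> 0" using gh nz by auto
  have dx: "degree (xn1 m :: 'a poly) = m" using degree_xn1[OF m] by simp
  have "degree g + degree h = m" using degree_mult_eq[OF g0 h0] gh dx by simp
  then show "degree h = m - k" "k \<le> m" using k by auto
  have "coeff g 0 * coeff h 0 = coeff (xn1 m :: 'a poly) 0" using gh coeff_mult_0[of g h] by simp
  also have "\<dots> = -1" using m by (simp add: coeff_xn1)
  finally show "coeff h 0 \<noteq> 0" by auto
qed

lemma degree_monom_1 [simp]: "degree (monom (1::'a::field) j) = j"
  by (simp add: degree_monom_eq)

lemma degree_monom_mult: "p \<noteq> 0 \<Longrightarrow> degree (monom (1::'a::field) i * p) = i + degree p"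
  by (simp add: degree_mult_eq degree_monom_eq)

lemma revm_monom: "i < k \<Longrightarrow> revm k (monom (1::'a::comm_ring_1) i) = monom 1 (k - 1 - i)"
  by (rule poly_eqI) (auto simp: coeff_revm coeff_monom)

lemma P1:
  fixes g h f :: "'a::field poly"
  assumes m: "m > 0" and gh: "g * h = xn1 m" and k: "degree g = k" "k < m" and i: "i < k"
  shows "dotp m (coeff_vec m ((g * f) mod xn1 m)) (coeff_vec m (monom 1 i * reflect_poly h)) = 0"
proof -
  note b = basic_gh[OF m gh k(1)]
  have nz: "xn1 m \<noteq> (0 :: 'a poly)" using xn1_nz[OF m] by simp
  have dx: "degree (xn1 m :: 'a poly) = m" using degree_xn1[OF m] by simp
  define hs where "hs = reflect_poly h"
  have hsnz: "hs \<noteq> 0" unfolding hs_def using b by simp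
  have dhs: "degree hs = m - k" unfolding hs_def using b by simp
  define P where "P = monom 1 i * hs"
  have Pnz: "P \<noteq> 0" unfolding P_def using hsnz by simp
  have dP: "degree P = i + (m - k)" unfolding P_def using hsnz dhs by (simp add: degree_monom_mult)
  have dP2: "degree P < m" using dP i k by simp
  define A where "A = (g * f) mod xn1 m"
  have dA: "degree A < m"
  proof (cases "A = 0")
    case True then show ?thesis using m by simp
  next
    case False then show ?thesis unfolding A_def using degree_mod_less[OF nz, of "g * f"] dx by simp
  qed
  have "dotp m (coeff_vec m A) (coeff_vec m P) = coeff (A * revm m (Poly (coeff_vec m P))) (m - 1)"
    by (rule dot_lemma) (use m dA in auto)
  also have "Poly (coeff_vec m P) = P" using dP2 by (rule Poly_coeff_vec)
  also have "revm m P = monom 1 (k - 1 - i) * h"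
  proof -
    have dm: "degree (monom (1::'a) i) = i" by (simp add: degree_monom_eq)
    have "revm (k + (m - k + 1) - 1) (monom 1 i * hs) = revm k (monom 1 i) * revm (m - k + 1) hs"
      by (rule revm_mult) (use i dhs hsnz dm in auto)
    moreover have "k + (m - k + 1) - 1 = m" using k by simp
    moreover have "revm (m - k + 1) hs = h"
    proof -
      have "revm (m - k + 1) hs = monom 1 (m - k + 1 - 1 - degree hs) * reflect_poly hs"
        by (rule revm_reflect) (use hsnz dhs in auto)
      also have "\<dots> = h" using dhs b unfolding hs_def by simp
      finally show ?thesis .
    qed
    ultimately show ?thesis using i by (simp add: P_def revm_monom)
  qed
  also have "coeff (A * (monom 1 (k - 1 - i) * h)) (m - 1) = coeff ((A * (monom 1 (k - 1 - i) * h)) mod xn1 m) (m - 1)"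
  proof (cases "A = 0")
    case True then show ?thesis by simp
  next
    case False
    have "degree (A * (monom 1 (k - 1 - i) * h)) = degree A + ((k - 1 - i) + (m - k))"
      using False b by (simp add: degree_mult_eq degree_monom_mult)
    also have "\<dots> < 2 * m - 1" using dA i k by linarith
    finally show ?thesis using mod_coeff_top[OF m] by metis
  qed
  also have "(A * (monom 1 (k - 1 - i) * h)) mod xn1 m = (g * f * (monom 1 (k - 1 - i) * h)) mod xn1 m"
    unfolding A_def by (rule mod_mult_left_eq)
  also have "g * f * (monom 1 (k - 1 - i) * h) = xn1 m * (f * monom 1 (k - 1 - i))"
    using gh by (metis mult.assoc mult.commute)
  finally show ?thesis unfolding A_def P_def hs_def by simp
qed



lemma P2:
  fixes g h :: "'a::field poly"
  assumes m: "m > 0" and gh: "g * h = xn1 m" and k: "degree g = k" "k < m"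
    and w: "length w = m"
    and hyp: "\<And>j. j < m \<Longrightarrow> dotp m (coeff_vec m ((g * monom 1 j) mod xn1 m)) w = 0"
  shows "\<exists>Q. revm m (Poly w) = h * Q \<and> w = coeff_vec m (revm k Q * reflect_poly h)"
proof -
  note b = basic_gh[OF m gh k(1)]
  have nz: "xn1 m \<noteq> (0 :: 'a poly)" using xn1_nz[OF m] by simp
  have dx: "degree (xn1 m :: 'a poly) = m" using degree_xn1[OF m] by simp
  have dmod: "degree (X mod xn1 m) < m" for X :: "'a poly"
  proof (cases "X mod xn1 m = 0")
    case True then show ?thesis using m by simp
  next
    case False then show ?thesis using degree_mod_less[OF nz, of X] dx by simp
  qed
  define Wr where "Wr = revm m (Poly w)"
  have dWr: "degree Wr < m" unfolding Wr_def using m by (rule degree_revm)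
  define Z where "Z = (g * Wr) mod xn1 m"
  have cZ: "coeff Z (m - 1 - j) = 0" if j: "j < m" for j
  proof -
    have "0 = dotp m (coeff_vec m ((g * monom 1 j) mod xn1 m)) w" using hyp[OF j] by simp
    also have "\<dots> = coeff (((g * monom 1 j) mod xn1 m) * Wr) (m - 1)"
      unfolding Wr_def by (rule dot_lemma) (use m w dmod in auto)
    also have "\<dots> = coeff ((((g * monom 1 j) mod xn1 m) * Wr) mod xn1 m) (m - 1)"
    proof (cases "((g * monom 1 j) mod xn1 m) * Wr = 0")
      case True then show ?thesis by (simp only: True mod_0)
    next
      case False
      then have "degree (((g * monom 1 j) mod xn1 m) * Wr) = degree ((g * monom 1 j) mod xn1 m) + degree Wr"
        by (simp add: degree_mult_eq)
      also have "\<dots> < 2 * m - 1" using dmod[of "g * monom 1 j"] dWr by linarith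
      finally show ?thesis using mod_coeff_top[OF m] by metis
    qed
    also have "(((g * monom 1 j) mod xn1 m) * Wr) mod xn1 m = (monom 1 j * (g * Wr)) mod xn1 m"
    proof -
      have "(((g * monom 1 j) mod xn1 m) * Wr) mod xn1 m = ((g * monom 1 j) * Wr) mod xn1 m"
        by (rule mod_mult_left_eq)
      then show ?thesis by (simp add: ac_simps)
    qed
    also have "\<dots> = (monom 1 j * Z) mod xn1 m" unfolding Z_def by (simp add: mod_mult_right_eq)
    also have "coeff \<dots> (m - 1) = coeff (monom 1 j * Z) (m - 1)"
    proof (cases "Z = 0")
      case True then show ?thesis by simp
    next
      case False
      then have "degree (monom 1 j * Z) = j + degree Z" by (simp add: degree_monom_mult)
      also have "\<dots> < 2 * m - 1" using dmod[of "g * Wr"] j unfolding Z_def by linarith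
      finally show ?thesis using mod_coeff_top[OF m] by metis
    qed
    also have "\<dots> = coeff Z (m - 1 - j)" using j by (simp add: coeff_monom_mult)
    finally show ?thesis by simp
  qed
  have Z0: "Z = 0"
  proof (rule poly_eqI)
    fix t
    show "coeff Z t = coeff 0 t"
    proof (cases "t < m")
      case True
      then have "t = m - 1 - (m - 1 - t)" "m - 1 - t < m" by auto
      then show ?thesis using cZ by (metis coeff_0)
    next
      case False
      then show ?thesis using dmod[of "g * Wr"] unfolding Z_def by (simp add: coeff_eq_0)
    qed
  qed
  have "xn1 m dvd g * Wr" using Z0 unfolding Z_def by (simp add: mod_eq_0_iff_dvd)
  then have "g * h dvd g * Wr" using gh by simp
  then have "h dvd Wr" using b by simp
  then obtain Q where Q: "Wr = h * Q" by (elim dvdE)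
  have pw: "Poly w = revm m Wr" unfolding Wr_def
    by (rule revm_revm[symmetric]) (rule degree_Poly_lt[OF w m])
  show ?thesis
  proof (intro exI conjI)
    show "revm m (Poly w) = h * Q" using Q unfolding Wr_def .
    show "w = coeff_vec m (revm k Q * reflect_poly h)"
    proof (cases "Q = 0")
      case True
      then have "Poly w = 0" using pw Q by simp
      then show ?thesis using True coeff_vec_Poly[OF w] by simp
    next
      case False
      have "degree Wr = (m - k) + degree Q" using Q False b by (simp add: degree_mult_eq)
      then have dQ: "degree Q < k" using dWr b k by linarith
      have "revm ((m - k + 1) + k - 1) (h * Q) = revm (m - k + 1) h * revm k Q"
        by (rule revm_mult) (use False b dQ in auto)
      moreover have "(m - k + 1) + k - 1 = m" using k by simp
      moreover have "revm (m - k + 1) h = reflect_poly h"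
        using revm_reflect[of h "m - k + 1"] b by simp
      ultimately have "Poly w = reflect_poly h * revm k Q" using pw Q by simp
      then show ?thesis using coeff_vec_Poly[OF w] by (simp add: ac_simps)
    qed
  qed
qed



context ffq begin

definition frobp :: "'a poly \<Rightarrow> 'a poly" where
  "frobp P = map_poly (\<lambda>c. c ^ q) P"

lemma coeff_frobp: "coeff (frobp P) i = coeff P i ^ q"
  unfolding frobp_def by (rule coeff_map_poly) (use q2 in \<open>simp add: zero_power\<close>)

lemma frobp_mult: "frobp (A * B) = frobp A * frobp B"
  by (rule poly_eqI) (simp add: coeff_frobp coeff_mult fsum power_mult_distrib)

lemma frobp_add: "frobp (A + B) = frobp A + frobp B"
  by (rule poly_eqI) (simp add: coeff_frobp fadd)

lemma over_iff: "over_Fq q P \<longleftrightarrow> frobp P = P"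
  by (simp add: over_Fq_def subfield_q_def poly_eq_iff coeff_frobp)

lemma over_mult: "over_Fq q (A :: 'a poly) \<Longrightarrow> over_Fq q B \<Longrightarrow> over_Fq q (A * B)"
  by (simp add: over_iff frobp_mult)

lemma over_cancel:
  fixes A B C :: "'a poly"
  assumes "over_Fq q A" "over_Fq q B" "B \<noteq> 0" "A = B * C"
  shows "over_Fq q C"
proof -
  have "B * C = B * frobp C" using assms by (metis over_iff frobp_mult)
  then show ?thesis using assms(3) by (simp add: over_iff)
qed

lemma over_xn1: "over_Fq q (xn1 m :: 'a poly)"
  unfolding over_Fq_def coeff_xn1 by (auto intro!: Fdiff simp: F0 F1 Fneg)

lemma over_monom: "(c::'a) \<in> subfield_q q \<Longrightarrow> over_Fq q (monom c j)"
  unfolding over_Fq_def by (auto simp: coeff_monom F0)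

lemma over_mod:
  fixes X :: "'a poly"
  assumes m: "m > 0" and X: "over_Fq q X"
  shows "over_Fq q (X mod xn1 m)"
proof -
  have nz: "xn1 m \<noteq> (0 :: 'a poly)" using xn1_nz[OF m] by simp
  have dx: "degree (xn1 m :: 'a poly) = m" using degree_xn1[OF m] by simp
  define D where "D = X div xn1 m"
  define R where "R = X mod xn1 m"
  have XD: "X = R + xn1 m * D" unfolding D_def R_def by (simp add: ac_simps)
  have "frobp X = frobp R + xn1 m * frobp D"
    using XD over_xn1[of m] by (metis frobp_add frobp_mult over_iff)
  then have X2: "X = frobp R + xn1 m * frobp D" using X by (simp add: over_iff)
  have "R = X mod xn1 m" by (simp add: R_def)
  also have "\<dots> = frobp R mod xn1 m" using X2 by (metis mod_mult_self2)
  also have "\<dots> = frobp R"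
  proof (cases "R = 0")
    case True
    then have "frobp R = 0" by (simp add: frobp_def)
    then show ?thesis by simp
  next
    case False
    then have "degree R < m" unfolding R_def using degree_mod_less[OF nz, of X] dx by simp
    moreover have "degree (frobp R) \<le> degree R" unfolding frobp_def by (simp add: degree_map_poly)
    ultimately show ?thesis using dx by (intro mod_poly_less) simp
  qed
  finally show ?thesis unfolding R_def by (simp add: over_iff)
qed

lemma over_coeff_vec: "over_Fq q (P :: 'a poly) \<Longrightarrow> set (coeff_vec m P) \<subseteq> subfield_q q"
  by (auto simp: over_Fq_def coeff_vec_def)

end

lemma sigma_cv:
  fixes P :: "'a::comm_ring_1 poly"
  assumes "m > 0" "coeff P (m - 1) = 0"
  shows "sigma (coeff_vec m P) = coeff_vec m (monom 1 (Suc 0) * P)"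
proof -
  obtain m' where m': "m = Suc m'" using assms by (cases m) auto
  have "coeff_vec m P = map (coeff P) [0..<m'] @ [coeff P m']"
    unfolding coeff_vec_def m' by simp
  then have "sigma (coeff_vec m P) = coeff P m' # map (coeff P) [0..<m']"
    by (simp add: sigma_def)
  also have "\<dots> = coeff_vec m (monom 1 (Suc 0) * P)"
  proof (rule nth_equalityI)
    fix j assume "j < length (coeff P m' # map (coeff P) [0..<m'])"
    then have j: "j < m" using m' by simp
    show "(coeff P m' # map (coeff P) [0..<m']) ! j = coeff_vec m (monom 1 (Suc 0) * P) ! j"
      using j assms m' by (cases j) (auto simp: coeff_monom_mult)
  qed (simp add: m')
  finally show ?thesis .
qed

lemma sigma_pow:
  fixes hs :: "'a::field poly"
  assumes m: "m > 0" and d: "degree hs \<le> m - k" and k: "k \<le> m"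
  shows "i < k \<Longrightarrow> (sigma ^^ i) (coeff_vec m hs) = coeff_vec m (monom 1 i * hs)"
proof (induction i)
  case 0 then show ?case by simp
next
  case (Suc i)
  then have IH: "(sigma ^^ i) (coeff_vec m hs) = coeff_vec m (monom 1 i * hs)" by simp
  have "coeff (monom 1 i * hs) (m - 1) = 0"
    using Suc.prems d k m by (auto simp: coeff_monom_mult intro!: coeff_eq_0)
  then have "sigma (coeff_vec m (monom 1 i * hs)) = coeff_vec m (monom 1 (Suc 0) * (monom 1 i * hs))"
    by (rule sigma_cv[OF m])
  also have "monom 1 (Suc 0) * (monom 1 i * hs) = monom (1::'a) (Suc i) * hs"
    by (simp add: mult.assoc[symmetric] mult_monom)
  finally show ?case using IH by simp
qed

lemma prim_order:
  fixes \<beta> :: "'a::{field,finite}"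
  assumes "primitive_elem \<beta>" "j > 0" "\<beta> ^ j = 1"
  shows "card (UNIV :: 'a set) - 1 \<le> j"
proof -
  have "UNIV - {0} \<subseteq> (\<lambda>i. \<beta> ^ i) ` {..<j}"
  proof
    fix x :: 'a assume "x \<in> UNIV - {0}"
    then obtain i where i: "\<beta> ^ i = x" using assms(1) unfolding primitive_elem_def by auto
    have "\<beta> ^ i = \<beta> ^ (j * (i div j)) * \<beta> ^ (i mod j)" by (simp add: power_add[symmetric])
    also have "\<beta> ^ (j * (i div j)) = 1" using assms(3) by (simp add: power_mult)
    finally show "x \<in> (\<lambda>i. \<beta> ^ i) ` {..<j}" using i assms(2) by auto
  qed
  then have "card (UNIV - {0 :: 'a}) \<le> card ((\<lambda>i. \<beta> ^ i) ` {..<j})" by (intro card_mono) auto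
  also have "\<dots> \<le> j" using card_image_le[of "{..<j}" "\<lambda>i. \<beta> ^ i"] by simp
  finally show ?thesis by (simp add: card_Diff_singleton)
qed



lemma dotp_neg: "length b = m \<Longrightarrow> dotp m a (map uminus b) = - dotp m a (b :: 'a::comm_ring_1 list)"
  by (simp add: dotp_def sum_negf[symmetric])

lemma lincomb_cong: "(\<And>i. i < k \<Longrightarrow> v i = v' i) \<Longrightarrow> lincomb n k c v = lincomb n k c v'"
  by (simp add: lincomb_def)

lemma map_uminus_lincomb: "map uminus (lincomb m k c v) = lincomb m k (\<lambda>i. - c i) v"
  by (rule nth_equalityI) (simp_all add: nth_lincomb sum_negf[symmetric])

context ffq begin

lemma tau_F: "set v \<subseteq> subfield_q q \<Longrightarrow> set (tau n v) \<subseteq> subfield_q q" for v :: "'a list"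
  unfolding tau_def using set_drop_subset[of n v] set_take_subset[of n v]
  by (auto intro!: Fneg)

end

theorem theorem4p5:
  fixes q n :: nat and \<beta> :: "'a::{field,finite}" and g :: "'a poly"
  assumes "prime_power q"
    and "card (UNIV :: 'a set) = q ^ 2"
    and "primitive_elem \<beta>"
    and "n > 0"
    and "over_Fq q g"
    and "lead_coeff g = 1"
    and "g dvd xn1 (2*n)"
    and "g \<noteq> xn1 (2*n)"
  shows "let k = degree g;
             h = xn1 (2*n) div g;
             hstar = smult (1 / lead_coeff h) (reflect_poly h);
             V = coeff_vec (2*n) hstar
         in is_Fq_basis q n k
              (\<lambda>i. Psi_inv q \<beta> n (tau n ((sigma ^^ i) V)))
              (alt_dual q \<beta> n (code_C q \<beta> n g))"
proof -
  note cf = char_facts[OF assms(1) assms(2)]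
  have q2: "q \<ge> 2" by (rule cf(1))
  have qq: "q * q \<ge> 2 * q" using q2 by simp
  have cardq: "card (UNIV :: 'a set) = q * q" using assms(2) by (simp add: power2_eq_square)
  have bnz: "\<beta> \<noteq> 0"
  proof
    assume b0: "\<beta> = 0"
    have "UNIV \<subseteq> {0, 1::'a}"
    proof
      fix x :: 'a
      show "x \<in> {0, 1}"
      proof (cases "x = 0")
        case False
        then obtain j where "\<beta> ^ j = x" using assms(3) unfolding primitive_elem_def by auto
        then show ?thesis using b0 by (cases j) auto
      qed simp
    qed
    then have "card (UNIV :: 'a set) \<le> card {0, 1::'a}" by (intro card_mono) auto
    also have "\<dots> \<le> 2" by (rule card_insert_le_m1) auto
    finally show False using cardq qq q2 by linarith
  qed
  have dnz: "\<beta> ^ 2 - \<beta> ^ (2*q) \<noteq> 0"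
  proof
    assume "\<beta> ^ 2 - \<beta> ^ (2*q) = 0"
    then have e: "\<beta> ^ (2*q) = \<beta> ^ 2" by simp
    have "2*q = (2*q - 2) + 2" using q2 by simp
    then have "\<beta> ^ (2*q) = \<beta> ^ (2*q - 2) * \<beta> ^ 2" by (metis power_add)
    then have "\<beta> ^ (2*q - 2) * \<beta> ^ 2 = 1 * \<beta> ^ 2" using e by simp
    then have "\<beta> ^ (2*q - 2) = 1" using bnz by (metis mult_right_cancel power_not_zero)
    then have "card (UNIV :: 'a set) - 1 \<le> 2*q - 2" using prim_order[OF assms(3)] q2 by simp
    then show False using cardq qq q2 by linarith
  qed
  interpret ffq q \<beta> using q2 cf(2) cf(3) dnz by unfold_locales auto
  have m: "2 * n > 0" using assms(4) by simp
  define h where "h = xn1 (2*n) div g"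
  have gh: "g * h = xn1 (2*n)" using assms(7) unfolding h_def by (rule dvd_mult_div_cancel)
  define k where "k = degree g"
  note b = basic_gh[OF m gh k_def[symmetric]]
  have lch: "lead_coeff h = 1"
  proof -
    have "lead_coeff (g * h) = lead_coeff g * lead_coeff h" by (rule lead_coeff_mult)
    moreover have "lead_coeff (xn1 (2*n) :: 'a poly) = 1" using lc_xn1[OF m] by simp
    ultimately show ?thesis using gh assms(6) by simp
  qed
  have kl: "k < 2 * n"
  proof (rule ccontr)
    assume "\<not> k < 2 * n"
    then have "degree h = 0" using b by simp
    then have "h = [:lead_coeff h:]" by (metis degree_0_id)
    then have "h = 1" using lch by (simp add: one_pCons)
    then show False using gh assms(8) by simp
  qed
  define hs where "hs = reflect_poly h"
  have hstar_eq: "smult (1 / lead_coeff h) (reflect_poly h) = hs" using lch by (simp add: hs_def)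
  have hsnz: "hs \<noteq> 0" unfolding hs_def using b by simp
  have dhs: "degree hs = 2 * n - k" unfolding hs_def using b by simp
  have overh: "over_Fq q h" by (rule over_cancel[OF over_xn1 assms(5) b(1) gh[symmetric]])
  have overhs: "over_Fq q hs"
    using overh unfolding over_Fq_def hs_def coeff_reflect_poly by (auto simp: F0)
  define Ev where "Ev i = coeff_vec (2*n) (monom 1 i * hs)" for i
  have sig: "(sigma ^^ i) (coeff_vec (2*n) hs) = Ev i" if "i < k" for i
    unfolding Ev_def by (rule sigma_pow[OF m]) (use dhs b that in auto)
  have EvF: "set (Ev i) \<subseteq> subfield_q q" for i
    unfolding Ev_def by (rule over_coeff_vec) (rule over_mult[OF over_monom[OF F1] overhs])
  have Evlen: "length (Ev i) = 2 * n" for i by (simp add: Ev_def)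
  define Tv where "Tv i = tau n (Ev i)" for i
  have Tvlen: "length (Tv i) = 2 * n" for i by (simp add: Tv_def Evlen)
  have TvF: "set (Tv i) \<subseteq> subfield_q q" for i unfolding Tv_def by (rule tau_F[OF EvF])
  have TvF': "Tv i ! j \<in> subfield_q q" if "j < 2 * n" for i j
    using TvF[of i] Tvlen[of i] that by (auto simp: set_conv_nth)
  define B where "B i = Psi_inv q \<beta> n (tau n ((sigma ^^ i) (coeff_vec (2*n) hs)))" for i
  have Bi: "B i = PI n (Tv i)" if "i < k" for i
    unfolding B_def sig[OF that] Tv_def[symmetric] by (rule Psi_inv_eq[OF Tvlen TvF])
  have LB: "lincomb n k c B = lincomb n k c (\<lambda>i. PI n (Tv i))" for c
    by (rule lincomb_cong) (simp add: Bi)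
  have main: "is_Fq_basis q n k B (alt_dual q \<beta> n (code_C q \<beta> n g))"
    unfolding is_Fq_basis_def
  proof (intro conjI)
    show "\<forall>i<k. B i \<in> alt_dual q \<beta> n (code_C q \<beta> n g)"
    proof (intro allI impI)
      fix i assume i: "i < k"
      show "B i \<in> alt_dual q \<beta> n (code_C q \<beta> n g)"
        unfolding Bi[OF i] alt_dual_def
      proof (intro CollectI conjI ballI)
        show "length (PI n (Tv i)) = n" by simp
        fix u assume "u \<in> code_C q \<beta> n g"
        then obtain f where u: "length u = n" "Psi q \<beta> u = coeff_vec (2*n) ((g * f) mod xn1 (2*n))"
          unfolding code_C_def cyclic_code_def by auto
        have "alt_ip q \<beta> n u (PI n (Tv i)) = dotp (2*n) (Psi q \<beta> u) (tau n (Psi q \<beta> (PI n (Tv i))))"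
          by (rule alt_ident) (simp_all add: u)
        also have "Psi q \<beta> (PI n (Tv i)) = Tv i" by (rule Psi_PI[OF Tvlen TvF])
        also have "tau n (Tv i) = map uminus (Ev i)" unfolding Tv_def by (rule tau_tau[OF Evlen])
        also have "dotp (2*n) (Psi q \<beta> u) (map uminus (Ev i))
            = - dotp (2*n) (coeff_vec (2*n) ((g * f) mod xn1 (2*n))) (Ev i)"
          using u(2) dotp_neg[OF Evlen] by simp
        also have "dotp (2*n) (coeff_vec (2*n) ((g * f) mod xn1 (2*n))) (Ev i) = 0"
          unfolding Ev_def hs_def by (rule P1[OF m gh k_def[symmetric] kl i])
        finally show "alt_ip q \<beta> n u (PI n (Tv i)) = 0" by simp
      qed
    qed
  next
    show "\<forall>c. (\<forall>i<k. c i \<in> subfield_q q) \<and> lincomb n k c B = replicate n 0 \<longrightarrow> (\<forall>i<k. c i = 0)"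
    proof (intro allI impI)
      fix c i assume "(\<forall>i<k. c i \<in> subfield_q q) \<and> lincomb n k c B = replicate n 0" and i: "i < k"
      then have cF: "\<And>i. i < k \<Longrightarrow> c i \<in> subfield_q q" and z: "lincomb n k c B = replicate n 0" by auto
      define y where "y = lincomb (2*n) k c Tv"
      have ylen: "length y = 2 * n" by (simp add: y_def)
      have yF: "set y \<subseteq> subfield_q q" unfolding y_def by (rule lincomb_F) (use cF TvF' in auto)
      have "PI n y = lincomb n k c (\<lambda>i. PI n (Tv i))" unfolding y_def by (rule PI_lincomb) (simp add: Tvlen)
      also have "\<dots> = replicate n 0" using z LB by simp
      finally have "y = Psi q \<beta> (replicate n 0)" using Psi_PI[OF ylen yF] by simp
      also have "\<dots> = replicate (2*n) 0"
      proof -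
        have r: "replicate (2*n) (0::'a) = replicate n 0 @ replicate n 0"
          by (simp only: mult_2 replicate_add)
        show ?thesis unfolding r using q2 by (simp add: Psi_def Tr_def zero_power)
      qed
      finally have y0: "y = replicate (2*n) 0" .
      have "y = tau n (lincomb (2*n) k c Ev)" unfolding y_def Tv_def by (rule tau_lincomb[symmetric]) (simp add: Evlen)
      then have "tau n y = map uminus (lincomb (2*n) k c Ev)" by (simp add: tau_tau)
      moreover have "tau n y = replicate (2*n) 0"
      proof -
        have r: "replicate (2*n) (0::'a) = replicate n 0 @ replicate n 0"
          by (simp only: mult_2 replicate_add)
        show ?thesis unfolding y0 unfolding r by (simp add: tau_def)
      qed
      ultimately have "map uminus (map uminus (lincomb (2*n) k c Ev)) = map uminus (replicate (2*n) 0)" by simp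
      then have L: "lincomb (2*n) k c Ev = replicate (2*n) 0" by (simp add: map_replicate)
      define Qc where "Qc = (\<Sum>i<k. monom (c i) i)"
      have CV: "coeff_vec (2*n) (Qc * hs) = replicate (2*n) 0"
        using L unfolding Ev_def Qc_def lincomb_coeff_vec .
      have cQ: "coeff Qc j = (if j < k then c j else 0)" for j
        by (simp add: Qc_def coeff_sum coeff_monom)
      have Q0: "Qc = 0"
      proof (rule ccontr)
        assume Qnz: "Qc \<noteq> 0"
        have "degree Qc \<le> k - 1" by (rule degree_le) (auto simp: cQ)
        moreover have "k > 0" using i by simp
        ultimately have "degree Qc < k" by simp
        then have "degree (Qc * hs) < 2 * n" using Qnz hsnz dhs kl by (simp add: degree_mult_eq)
        then have "Qc * hs = Poly (coeff_vec (2*n) (Qc * hs))" by (simp add: Poly_coeff_vec)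
        also have "\<dots> = 0" unfolding CV by simp
        finally show False using Qnz hsnz by simp
      qed
      show "c i = 0" using cQ[of i] Q0 i by simp
    qed
  next
    show "\<forall>w\<in>alt_dual q \<beta> n (code_C q \<beta> n g). \<exists>c. (\<forall>i<k. c i \<in> subfield_q q) \<and> w = lincomb n k c B"
    proof
      fix v assume "v \<in> alt_dual q \<beta> n (code_C q \<beta> n g)"
      then have vlen: "length v = n" and vort: "\<And>u. u \<in> code_C q \<beta> n g \<Longrightarrow> alt_ip q \<beta> n u v = 0"
        by (auto simp: alt_dual_def)
      define ww where "ww = tau n (Psi q \<beta> v)"
      have wwlen: "length ww = 2 * n" by (simp add: ww_def vlen)
      have wwF: "set ww \<subseteq> subfield_q q" unfolding ww_def by (rule tau_F[OF Psi_F])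
      have hyp: "dotp (2*n) (coeff_vec (2*n) ((g * monom 1 j) mod xn1 (2*n))) ww = 0" if j: "j < 2 * n" for j
      proof -
        define dj where "dj = coeff_vec (2*n) ((g * monom 1 j) mod xn1 (2*n))"
        have djF: "set dj \<subseteq> subfield_q q" unfolding dj_def
          by (rule over_coeff_vec[OF over_mod[OF m over_mult[OF assms(5) over_monom[OF F1]]]])
        have djlen: "length dj = 2 * n" by (simp add: dj_def)
        define uj where "uj = PI n dj"
        have Pu: "Psi q \<beta> uj = dj" unfolding uj_def by (rule Psi_PI[OF djlen djF])
        have "uj \<in> code_C q \<beta> n g" unfolding code_C_def cyclic_code_def
          using Pu over_monom[OF F1, of j] by (auto simp: uj_def dj_def)
        then have "alt_ip q \<beta> n uj v = 0" by (rule vort)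
        moreover have "alt_ip q \<beta> n uj v = dotp (2*n) (Psi q \<beta> uj) ww"
          unfolding ww_def by (rule alt_ident) (simp_all add: uj_def vlen)
        ultimately show ?thesis using Pu by (simp add: dj_def)
      qed
      obtain Q where Q1: "revm (2*n) (Poly ww) = h * Q"
        and Q2: "ww = coeff_vec (2*n) (revm k Q * reflect_poly h)"
        using P2[OF m gh k_def[symmetric] kl wwlen hyp] by blast
      have overW: "over_Fq q (revm (2*n) (Poly ww))"
        unfolding over_Fq_def coeff_revm
      proof
        fix t
        show "(if t < 2 * n then coeff (Poly ww) (2 * n - 1 - t) else 0) \<in> subfield_q q"
        proof (cases "t < 2 * n")
          case True
          then have "2 * n - 1 - t < length ww" using wwlen by simp
          then have "ww ! (2 * n - 1 - t) \<in> subfield_q q" using wwF nth_mem by blast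
          then show ?thesis using True \<open>2 * n - 1 - t < length ww\<close> by (simp add: nth_default_def)
        qed (simp add: F0)
      qed
      have overQ: "over_Fq q Q" by (rule over_cancel[OF overW overh b(2) Q1])
      define c where "c i = coeff (revm k Q) i" for i
      have cF: "c i \<in> subfield_q q" for i
        using overQ unfolding c_def coeff_revm over_Fq_def by (auto simp: F0)
      have "(\<Sum>i<k. monom (c i) i) = revm k Q" unfolding c_def
        by (rule sum_monoms_eq) (simp add: coeff_revm)
      then have ww_eq: "ww = lincomb (2*n) k c Ev"
        unfolding Q2 Ev_def lincomb_coeff_vec hs_def by simp
      have "tau n ww = map uminus (Psi q \<beta> v)" unfolding ww_def by (rule tau_tau) (simp add: vlen)
      then have "Psi q \<beta> v = map uminus (tau n ww)" by (simp add: o_def)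
      also have "tau n ww = lincomb (2*n) k c Tv" unfolding ww_eq Tv_def by (rule tau_lincomb) (simp add: Evlen)
      also have "map uminus (lincomb (2*n) k c Tv) = lincomb (2*n) k (\<lambda>i. - c i) Tv" by (rule map_uminus_lincomb)
      finally have PV: "Psi q \<beta> v = lincomb (2*n) k (\<lambda>i. - c i) Tv" .
      have "v = PI n (Psi q \<beta> v)" using PI_Psi[OF vlen] by simp
      also have "\<dots> = lincomb n k (\<lambda>i. - c i) (\<lambda>i. PI n (Tv i))" unfolding PV by (rule PI_lincomb) (simp add: Tvlen)
      also have "\<dots> = lincomb n k (\<lambda>i. - c i) B" using LB by simp
      finally have vv: "v = lincomb n k (\<lambda>i. - c i) B" .
      have cF2: "\<forall>i<k. - c i \<in> subfield_q q" using cF Fneg by simp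
      show "\<exists>c. (\<forall>i<k. c i \<in> subfield_q q) \<and> v = lincomb n k c B"
        using vv cF2 by (intro exI[where x="\<lambda>i. - c i"]) simp
    qed
  qed
  show ?thesis
    unfolding Let_def h_def[symmetric] k_def[symmetric] hstar_eq
    using main unfolding B_def .
qed


end
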